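(* Let $M\in\mathcal{G}$. In the bosonic case, $C_M=\frac12(M-JMJ)$ is always invertible. In the fermionic case, $C_M$ is invertible if and only if $\Delta_{M^{-1}}=-M^{-1}JMJ$ has no eigenvalue equal to $-1$.
   Context: Bosonic case: $V=\mathbb{R}^{2N}$ with symplectic form $\Omega=\begin{pmatrix}0&\mathbb{1}\\-\mathbb{1}&0\end{pmatrix}$, $\mathcal{G}=\mathrm{Sp}(2N,\mathbb{R})=\{M\in\mathrm{SL}(2N,\mathbb{R}):M\Omega M^\intercal=\Omega\}$, and $J$ a real linear map with $J^2=-\mathbb{1}$, $J\Omega J^\intercal=\Omega$, $-J\Omega$ positive definite. Fermionic case: $V=\mathbb{R}^{2N}$ with metric $G=\mathbb{1}$, $\mathcal{G}=\mathrm{SO}(2N,\mathbb{R})$, $J$ real with $J^2=-\mathbb{1}$ and $JGJ^\intercal=G$. *)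

theory Defs
  imports "HOL-Analysis.Analysis"
begin

text \<open>Phase space V = R^{2N}, indexed by the type 'n + 'n (first N = positions,
  last N = momenta), so CARD('n) = N.\<close>

type_synonym ('n) sqmat = "real ^ ('n + 'n) ^ ('n + 'n)"

definition Omega :: "('n::finite) sqmat" where
  "Omega = (\<chi> i j. (case (i, j) of
              (Inl a, Inr b) \<Rightarrow> (if a = b then 1 else 0)
            | (Inr a, Inl b) \<Rightarrow> (if a = b then -1 else 0)
            | _ \<Rightarrow> 0))"

definition symplectic_group :: "('n::finite) sqmat set" where
  "symplectic_group = {M. det M = 1 \<and> M ** Omega ** transpose M = Omega}"

definition special_orthogonal_group :: "('n::finite) sqmat set" where
  "special_orthogonal_group = {M. det M = 1 \<and> M ** mat 1 ** transpose M = mat 1}"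

definition pos_def :: "('n::finite) sqmat \<Rightarrow> bool" where
  "pos_def A \<longleftrightarrow> transpose A = A \<and> (\<forall>x. x \<noteq> 0 \<longrightarrow> x \<bullet> (A *v x) > 0)"

definition bosonic_J :: "('n::finite) sqmat \<Rightarrow> bool" where
  "bosonic_J J \<longleftrightarrow> J ** J = - mat 1 \<and> J ** Omega ** transpose J = Omega
      \<and> pos_def (- (J ** Omega))"

definition fermionic_J :: "('n::finite) sqmat \<Rightarrow> bool" where
  "fermionic_J J \<longleftrightarrow> J ** J = - mat 1 \<and> J ** mat 1 ** transpose J = mat 1"

definition C_mat :: "('n::finite) sqmat \<Rightarrow> 'n sqmat \<Rightarrow> 'n sqmat" where
  "C_mat J M = (1/2) *\<^sub>R (M - J ** M ** J)"

definition Delta_mat :: "('n::finite) sqmat \<Rightarrow> 'n sqmat \<Rightarrow> 'n sqmat" where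
  "Delta_mat J M = - (M ** J ** matrix_inv M ** J)"

definition has_eigenvalue :: "('n::finite) sqmat \<Rightarrow> real \<Rightarrow> bool" where
  "has_eigenvalue A c \<longleftrightarrow> (\<exists>v. v \<noteq> 0 \<and> A *v v = c *\<^sub>R v)"

end

theory Submission
  imports Defs
begin

declare transpose_matrix_vector[simp del]

lemma dotT: "(x::real^'n::finite) \<bullet> (A *v w) = (transpose A *v x) \<bullet> w"
  by (metis dot_lmul_matrix vector_transpose_matrix transpose_transpose)

lemma transpose_neg: "transpose (- (A::real^'n::finite^'m::finite)) = - transpose A"
  by (simp add: transpose_def vec_eq_iff)

lemma transpose_diff: "transpose ((A::real^'n::finite^'m::finite) - B) = transpose A - transpose B"
  by (simp add: transpose_def vec_eq_iff)

lemma scaleR_mv: "((c::real) *\<^sub>R (A::real^'n::finite^'m::finite)) *v v = c *\<^sub>R (A *v v)"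
  by (simp add: matrix_vector_mult_def vec_eq_iff sum_distrib_left mult.assoc)

lemma neg_mv: "(- (A::real^'n::finite^'m::finite)) *v v = - (A *v v)"
  by (simp add: matrix_vector_mult_def vec_eq_iff sum_negf)

lemma neg_mm: "(- (A::real^'n::finite^'m::finite)) ** (B::real^'k::finite^'n) = - (A ** B)"
  by (simp add: matrix_matrix_mult_def vec_eq_iff sum_negf)

lemma inv_ker: "invertible (A::real^'n::finite^'n) \<longleftrightarrow> (\<forall>x. A *v x = 0 \<longrightarrow> x = 0)"
  using invertible_left_inverse matrix_left_invertible_ker by blast

lemma matrix_inv_eq:
  fixes A B :: "real^'n::finite^'n"
  assumes "A ** B = mat 1"
  shows "matrix_inv A = B"
proof -
  have BA: "B ** A = mat 1" using assms matrix_left_right_inverse by blast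
  have ex: "A ** matrix_inv A = mat 1 \<and> matrix_inv A ** A = mat 1"
    unfolding matrix_inv_def by (rule someI[of _ B]) (use assms BA in auto)
  have "matrix_inv A = matrix_inv A ** (A ** B)" using assms by simp
  also have "\<dots> = (matrix_inv A ** A) ** B" by (simp add: matrix_mul_assoc)
  also have "\<dots> = B" using ex by simp
  finally show ?thesis .
qed

lemma Omega_transpose: "transpose (Omega :: ('n::finite) sqmat) = - Omega"
  unfolding Omega_def transpose_def
  by (simp add: vec_eq_iff split: sum.splits)

lemma bosonic:
  fixes J M :: "('n::finite) sqmat"
  assumes hJ: "bosonic_J J" and hM: "M \<in> symplectic_group"
  shows "invertible (C_mat J M)"
proof -
  define G where "G = - (J ** Omega)"
  have JJ: "J ** J = - mat 1" and pos: "pos_def G" using hJ unfolding bosonic_J_def G_def by auto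
  have Gs: "transpose G = G" and Gp: "\<And>x. x \<noteq> 0 \<Longrightarrow> x \<bullet> (G *v x) > 0"
    using pos unfolding pos_def_def by auto
  have MO: "M ** Omega ** transpose M = Omega" using hM unfolding symplectic_group_def by auto
  have OJ: "Omega ** transpose J = G"
  proof -
    have "Omega ** transpose J = transpose (J ** transpose Omega)"
      by (simp add: matrix_transpose_mul)
    also have "\<dots> = transpose G" unfolding G_def Omega_transpose
      by (simp add: matrix_transpose_mul transpose_neg neg_mm)
    finally show ?thesis using Gs by simp
  qed
  have Gge: "z \<bullet> (G *v z) \<ge> 0" for z
    by (cases "z = 0") (auto dest: Gp intro: less_imp_le)
  define A where "A = transpose (C_mat J M)"
  have "\<forall>y. A *v y = 0 \<longrightarrow> y = 0"
  proof (intro allI impI)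
    fix y assume Ay: "A *v y = 0"
    have Aeq: "A = (1/2) *\<^sub>R (transpose M - transpose J ** transpose M ** transpose J)"
      unfolding A_def C_mat_def by (simp add: transpose_scalar transpose_diff matrix_transpose_mul matrix_mul_assoc)
    define a where "a = transpose J *v y"
    define z where "z = transpose M *v a"
    have key: "transpose M *v y = transpose J *v z"
    proof -
      have "(transpose M - transpose J ** transpose M ** transpose J) *v y = 0"
        using Ay unfolding Aeq by (simp add: scaleR_mv)
      hence "transpose M *v y = (transpose J ** transpose M ** transpose J) *v y"
        by (simp add: matrix_vector_mult_diff_rdistrib)
      thus ?thesis unfolding z_def a_def by (simp add: matrix_vector_mul_assoc matrix_mul_assoc del: transpose_matrix_vector)
    qed
    have "y \<bullet> (G *v y) = y \<bullet> (Omega *v a)"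
      unfolding a_def OJ[symmetric] by (simp add: matrix_vector_mul_assoc)
    also have "\<dots> = y \<bullet> ((M ** Omega ** transpose M) *v a)" using MO by simp
    also have "\<dots> = y \<bullet> (M *v (Omega *v z))"
      unfolding z_def by (simp add: matrix_vector_mul_assoc matrix_mul_assoc)
    also have "\<dots> = (transpose M *v y) \<bullet> (Omega *v z)" by (rule dotT)
    also have "\<dots> = (transpose J *v z) \<bullet> (Omega *v z)" using key by simp
    also have "\<dots> = z \<bullet> (J *v (Omega *v z))"
      by (metis dotT inner_commute transpose_transpose)
    also have "\<dots> = - (z \<bullet> (G *v z))"
      unfolding G_def by (simp add: matrix_vector_mul_assoc neg_mv inner_minus_right)
    finally have eq: "y \<bullet> (G *v y) = - (z \<bullet> (G *v z))" .
    show "y = 0"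
    proof (rule ccontr)
      assume "y \<noteq> 0"
      hence "y \<bullet> (G *v y) > 0" by (rule Gp)
      with eq Gge[of z] show False by simp
    qed
  qed
  hence "invertible A" using inv_ker by blast
  hence "invertible (transpose A)" by (rule transpose_invertible)
  thus ?thesis unfolding A_def by simp
qed

lemma fermionic:
  fixes J M :: "('n::finite) sqmat"
  assumes hJ: "fermionic_J J" and hM: "M \<in> special_orthogonal_group"
  shows "invertible (C_mat J M) \<longleftrightarrow> \<not> has_eigenvalue (Delta_mat J (matrix_inv M)) (-1)"
proof -
  have MMt: "M ** transpose M = mat 1" using hM unfolding special_orthogonal_group_def by simp
  have MtM: "transpose M ** M = mat 1" using MMt matrix_left_right_inverse by blast
  have i1: "matrix_inv M = transpose M" by (rule matrix_inv_eq[OF MMt])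
  have i2: "matrix_inv (transpose M) = M" by (rule matrix_inv_eq[OF MtM])
  have D: "Delta_mat J (matrix_inv M) = - (transpose M ** J ** M ** J)"
    unfolding Delta_mat_def i1 i2 ..
  have step: "C_mat J M *v v = 0 \<longleftrightarrow> Delta_mat J (matrix_inv M) *v v = (-1) *\<^sub>R v" for v
  proof -
    have "C_mat J M *v v = 0 \<longleftrightarrow> M *v v = (J ** M ** J) *v v"
      unfolding C_mat_def by (simp add: scaleR_mv matrix_vector_mult_diff_rdistrib)
    also have "\<dots> \<longleftrightarrow> v = (transpose M ** J ** M ** J) *v v"
    proof
      assume h: "M *v v = (J ** M ** J) *v v"
      have "v = transpose M *v (M *v v)" by (simp add: matrix_vector_mul_assoc MtM)
      also have "\<dots> = (transpose M ** J ** M ** J) *v v" unfolding h by (simp add: matrix_vector_mul_assoc matrix_mul_assoc)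
      finally show "v = (transpose M ** J ** M ** J) *v v" .
    next
      assume h: "v = (transpose M ** J ** M ** J) *v v"
      have "M *v v = M *v ((transpose M ** J ** M ** J) *v v)" using h by simp
      also have "\<dots> = ((M ** transpose M) ** (J ** M ** J)) *v v" by (simp add: matrix_vector_mul_assoc matrix_mul_assoc)
      also have "\<dots> = (J ** M ** J) *v v" using MMt by simp
      finally show "M *v v = (J ** M ** J) *v v" .
    qed
    also have "\<dots> \<longleftrightarrow> Delta_mat J (matrix_inv M) *v v = (-1) *\<^sub>R v"
      unfolding D by (auto simp: neg_mv)
    finally show ?thesis .
  qed
  show ?thesis unfolding inv_ker has_eigenvalue_def using step by blast
qed

theorem lemma1:
  fixes J M Jf Mf :: "('n::finite) sqmat"
  shows "(bosonic_J J \<and> M \<in> symplectic_group \<longrightarrow> invertible (C_mat J M))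
       \<and> (fermionic_J Jf \<and> Mf \<in> special_orthogonal_group \<longrightarrow>
            (invertible (C_mat Jf Mf) \<longleftrightarrow> \<not> has_eigenvalue (Delta_mat Jf (matrix_inv Mf)) (-1)))"
  using bosonic fermionic by blast

end
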